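(* Let $k:(0,\infty)\times(0,\infty)\to\mathbb{R}$ be a Borel-measurable kernel for which there exist $\alpha^*\in[0,1)$, $\varepsilon>0$ such that $K_T:=\sup_{0<t\le T}t^{\alpha^*-\frac1{1+\varepsilon}}\|k(t,\cdot)\|_{L^{1+\varepsilon}((0,t))}<\infty$ for every $T>0$. Then for any $\lambda\in\mathbb{C}$ and any $T>0$, the operator $\mathcal{R}_\lambda:B_b([0,T],\mathbb{C})\to B_b([0,T],\mathbb{C})$ defined by $(\mathcal{R}_\lambda g)(t):=1-\lambda\int_0^tk(t,s)g(s)ds$ for $t\in(0,T]$ and $(\mathcal{R}_\lambda g)(0):=1$ is well-defined (maps $B_b([0,T],\mathbb{C})$ into itself), and there exists $n_T\in\mathbb{N}$ such that $\mathcal{R}_\lambda^{n_T}$ is a strict contraction.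
   Context: $B_b([0,T],\mathbb{C})$ denotes the Banach space of bounded Borel-measurable complex-valued functions on $[0,T]$ with the supremum norm. *)

theory Defs
  imports "HOL-Analysis.Analysis"
begin

text \<open>The space B_b([0,T],C): bounded Borel functions on [0,T], represented as
  functions real => complex that vanish outside [0,T] (so that equality of
  elements is equality on [0,T]).\<close>
definition Bb :: "real \<Rightarrow> (real \<Rightarrow> complex) set" where
  "Bb T = {g. g \<in> borel_measurable (restrict_space borel {0..T})
             \<and> bounded (g ` {0..T})
             \<and> (\<forall>t. t \<notin> {0..T} \<longrightarrow> g t = 0)}"

definition supnorm :: "real \<Rightarrow> (real \<Rightarrow> complex) \<Rightarrow> real" where
  "supnorm T g = (SUP t\<in>{0..T}. norm (g t))"

definition Lp_int :: "(real \<Rightarrow> real \<Rightarrow> real) \<Rightarrow> real \<Rightarrow> real \<Rightarrow> ennreal" where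
  "Lp_int k p t = (\<integral>\<^sup>+ s. ennreal (\<bar>k t s\<bar> powr p) * indicator {0<..<t} s \<partial>lborel)"

definition R_op :: "(real \<Rightarrow> real \<Rightarrow> real) \<Rightarrow> complex \<Rightarrow> real \<Rightarrow> (real \<Rightarrow> complex) \<Rightarrow> real \<Rightarrow> complex" where
  "R_op k lam T g t =
     (if t = 0 then 1
      else if t \<in> {0<..T} then 1 - lam * (LINT s:{0<..<t}|lborel. complex_of_real (k t s) * g s)
      else 0)"

end

theory Submission
  imports Defs
begin

lemma Bb_borel: assumes "g \<in> Bb T" shows "g \<in> borel_measurable borel"
proof -
  have m: "g \<in> borel_measurable (restrict_space borel {0..T})" and z: "\<And>t. t \<notin> {0..T} \<Longrightarrow> g t = 0"
    using assms by (auto simp: Bb_def)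
  have "(\<lambda>x. indicator {0..T} x *\<^sub>R g x) \<in> borel_measurable borel"
    using m by (subst (asm) borel_measurable_restrict_space_iff) auto
  moreover have "(\<lambda>x. indicator {0..T} x *\<^sub>R g x) = g"
    using z by (auto simp: indicator_def fun_eq_iff)
  ultimately show ?thesis by simp
qed

lemma kk_borel:
  fixes k :: "real \<Rightarrow> real \<Rightarrow> real"
  assumes meas: "(\<lambda>(t, s). k t s) \<in> borel_measurable (restrict_space borel ({0<..} \<times> {0<..}))"
  shows "(\<lambda>x. indicator ({0<..} \<times> {0<..}) x *\<^sub>R (case x of (t,s) \<Rightarrow> k t s)) \<in> borel_measurable (borel :: (real \<times> real) measure)"
proof -
  have "{0<..} \<times> {0<..} \<in> sets (borel :: (real \<times> real) measure)"
    by (intro borel_open open_Times) auto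
  then show ?thesis using meas by (subst (asm) borel_measurable_restrict_space_iff) auto
qed

lemma G_meas:
  fixes k :: "real \<Rightarrow> real \<Rightarrow> real" and g :: "real \<Rightarrow> complex"
  assumes meas: "(\<lambda>(t, s). k t s) \<in> borel_measurable (restrict_space borel ({0<..} \<times> {0<..}))"
    and g: "g \<in> borel_measurable borel"
  shows "(\<lambda>t. LINT s:{0<..<t}|lborel. complex_of_real (k t s) * g s) \<in> borel_measurable borel"
proof -
  define kk where "kk = (\<lambda>x. indicator ({0<..} \<times> {0<..}) x *\<^sub>R (case x of (t,s) \<Rightarrow> k t s))"
  have kk[measurable]: "kk \<in> borel_measurable borel" unfolding kk_def by (rule kk_borel[OF meas])
  have S[measurable]: "{x::real\<times>real. 0 < snd x \<and> snd x < fst x} \<in> sets borel"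
  proof (rule borel_open)
    show "open {x::real\<times>real. 0 < snd x \<and> snd x < fst x}"
      by (intro open_Collect_conj open_Collect_less continuous_intros)
  qed
  have F: "(\<lambda>x. indicator {x::real\<times>real. 0 < snd x \<and> snd x < fst x} x *\<^sub>R (complex_of_real (kk x) * g (snd x))) \<in> borel_measurable borel"
  proof -
    have sn: "snd \<in> borel_measurable (borel :: (real \<times> real) measure)"
      by (intro borel_measurable_continuous_onI continuous_intros)
    have gs: "(\<lambda>x::real\<times>real. g (snd x)) \<in> borel_measurable borel"
      using measurable_comp[OF sn g] by (simp add: comp_def)
    have ks: "(\<lambda>x. complex_of_real (kk x)) \<in> borel_measurable borel" using kk by measurable
    show ?thesis
      by (intro borel_measurable_scaleR borel_measurable_indicator[OF S] borel_measurable_times ks gs)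
  qed
  have eq: "(\<lambda>x. indicator {x::real\<times>real. 0 < snd x \<and> snd x < fst x} x *\<^sub>R (complex_of_real (kk x) * g (snd x)))
     = (\<lambda>(t,s). indicator {0<..<t} s *\<^sub>R (complex_of_real (k t s) * g s))"
    by (auto simp: fun_eq_iff indicator_def kk_def)
  have "(\<lambda>(t,s). indicator {0<..<t} s *\<^sub>R (complex_of_real (k t s) * g s)) \<in> borel_measurable (borel \<Otimes>\<^sub>M lborel)"
  proof -
    have "sets (borel \<Otimes>\<^sub>M lborel) = sets (borel \<Otimes>\<^sub>M (borel::real measure))"
      by (rule sets_pair_measure_cong) auto
    also have "\<dots> = sets (borel :: (real \<times> real) measure)" by (metis borel_prod)
    finally have eqm: "borel_measurable (borel \<Otimes>\<^sub>M lborel) = borel_measurable (borel :: (real \<times> real) measure)"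
      by (intro measurable_cong_sets) auto
    show ?thesis using F unfolding eq eqm .
  qed
  then have "(\<lambda>t. \<integral>s. indicator {0<..<t} s *\<^sub>R (complex_of_real (k t s) * g s) \<partial>lborel) \<in> borel_measurable borel"
    by (rule lborel.borel_measurable_lebesgue_integral[where f="\<lambda>t s. indicator {0<..<t} s *\<^sub>R (complex_of_real (k t s) * g s)", simplified])
  then show ?thesis by (simp add: set_lebesgue_integral_def)
qed

lemma holder_nn:
  fixes f g :: "'a \<Rightarrow> real" and p q a b :: real
  assumes pq: "p > 1" "q > 1" "1/p + 1/q = 1"
    and f: "f \<in> borel_measurable M" and g: "g \<in> borel_measurable M"
    and f0: "\<And>x. f x \<ge> 0" and g0: "\<And>x. g x \<ge> 0"
    and ab: "a > 0" "b > 0"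
    and If: "(\<integral>\<^sup>+ x. ennreal (f x powr p) \<partial>M) \<le> ennreal (a powr p)"
    and Ig: "(\<integral>\<^sup>+ x. ennreal (g x powr q) \<partial>M) \<le> ennreal (b powr q)"
  shows "(\<integral>\<^sup>+ x. ennreal (f x * g x) \<partial>M) \<le> ennreal (a * b)"
proof -
  define c1 where "c1 = a * b / (p * a powr p)"
  define c2 where "c2 = a * b / (q * b powr q)"
  have c1: "c1 \<ge> 0" and c2: "c2 \<ge> 0" using ab pq by (auto simp: c1_def c2_def)
  have pw: "f x * g x \<le> c1 * f x powr p + c2 * g x powr q" for x
  proof -
    have "(f x / a) * (g x / b) \<le> (f x / a) powr p / p + (g x / b) powr q / q"
      using Youngs_inequality[OF pq, of "f x / a" "g x / b"] f0 g0 ab by auto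
    then have "a * b * ((f x / a) * (g x / b)) \<le> a * b * ((f x / a) powr p / p + (g x / b) powr q / q)"
      using ab by (intro mult_left_mono) auto
    moreover have "a * b * ((f x / a) * (g x / b)) = f x * g x" using ab by simp
    moreover have "a * b * ((f x / a) powr p / p + (g x / b) powr q / q) = c1 * f x powr p + c2 * g x powr q"
      using ab f0 g0 by (simp add: powr_divide c1_def c2_def field_simps)
    ultimately show ?thesis by simp
  qed
  have "(\<integral>\<^sup>+ x. ennreal (f x * g x) \<partial>M) \<le> (\<integral>\<^sup>+ x. ennreal c1 * ennreal (f x powr p) + ennreal c2 * ennreal (g x powr q) \<partial>M)"
    using pw c1 c2 by (intro nn_integral_mono) (auto simp flip: ennreal_mult ennreal_plus)
  also have "\<dots> = ennreal c1 * (\<integral>\<^sup>+ x. ennreal (f x powr p) \<partial>M) + ennreal c2 * (\<integral>\<^sup>+ x. ennreal (g x powr q) \<partial>M)"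
    using f g by (simp add: nn_integral_add nn_integral_cmult)
  also have "\<dots> \<le> ennreal c1 * ennreal (a powr p) + ennreal c2 * ennreal (b powr q)"
    using If Ig by (intro add_mono mult_left_mono) auto
  also have "\<dots> = ennreal (c1 * a powr p + c2 * b powr q)"
    using c1 c2 by (simp add: ennreal_mult ennreal_plus)
  also have "c1 * a powr p + c2 * b powr q = a * b"
  proof -
    have "c1 * a powr p + c2 * b powr q = a * b * (1/p + 1/q)"
      using ab pq by (simp add: c1_def c2_def field_simps)
    then show ?thesis using pq by simp
  qed
  finally show ?thesis .
qed


locale kctx =
  fixes k :: "real \<Rightarrow> real \<Rightarrow> real" and \<alpha> p q C T :: real
  assumes meas: "(\<lambda>(t, s). k t s) \<in> borel_measurable (restrict_space borel ({0<..} \<times> {0<..}))"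
    and alpha: "0 \<le> \<alpha>" "\<alpha> < 1"
    and pq: "p > 1" "q > 1" "1/p + 1/q = 1"
    and TC: "T > 0" "C > 0"
    and bnd: "\<forall>t\<in>{0<..T}. Lp_int k p t < \<infinity> \<and>
               t powr (\<alpha> - 1 / p) * enn2real (Lp_int k p t) powr (1 / p) \<le> C"
begin

lemma kslice_meas: "(\<lambda>s. \<bar>k t s\<bar> * indicator {0<..<t} s) \<in> borel_measurable borel"
proof -
  define kk where "kk = (\<lambda>x. indicator ({0<..} \<times> {0<..}) x *\<^sub>R (case x of (t,s) \<Rightarrow> k t s))"
  have kk: "kk \<in> borel_measurable borel" unfolding kk_def by (rule kk_borel[OF meas])
  have pr: "(\<lambda>s::real. (t, s)) \<in> borel_measurable borel"
    by (intro borel_measurable_continuous_onI continuous_intros)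
  have "(\<lambda>s. kk (t, s)) \<in> borel_measurable borel"
    using measurable_comp[OF pr kk] by (simp add: comp_def)
  then have "(\<lambda>s. \<bar>kk (t, s)\<bar> * indicator {0<..<t} s) \<in> borel_measurable borel"
    by measurable
  moreover have "(\<lambda>s. \<bar>kk (t, s)\<bar> * indicator {0<..<t} s) = (\<lambda>s. \<bar>k t s\<bar> * indicator {0<..<t} s)"
    by (auto simp: fun_eq_iff kk_def indicator_def)
  ultimately show ?thesis by simp
qed

lemma kslice_meas': "(\<lambda>s. k t s * indicator {0<..<t} s) \<in> borel_measurable borel"
proof -
  define kk where "kk = (\<lambda>x. indicator ({0<..} \<times> {0<..}) x *\<^sub>R (case x of (t,s) \<Rightarrow> k t s))"
  have kk: "kk \<in> borel_measurable borel" unfolding kk_def by (rule kk_borel[OF meas])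
  have pr: "(\<lambda>s::real. (t, s)) \<in> borel_measurable borel"
    by (intro borel_measurable_continuous_onI continuous_intros)
  have "(\<lambda>s. kk (t, s)) \<in> borel_measurable borel"
    using measurable_comp[OF pr kk] by (simp add: comp_def)
  then have "(\<lambda>s. kk (t, s) * indicator {0<..<t} s) \<in> borel_measurable borel"
    by measurable
  moreover have "(\<lambda>s. kk (t, s) * indicator {0<..<t} s) = (\<lambda>s. k t s * indicator {0<..<t} s)"
    by (auto simp: fun_eq_iff kk_def indicator_def)
  ultimately show ?thesis by simp
qed

lemma Lp_bound:
  assumes t: "t \<in> {0<..T}"
  shows "Lp_int k p t \<le> ennreal ((C * t powr (1/p - \<alpha>)) powr p)"
proof -
  define L where "L = enn2real (Lp_int k p t)"
  have fin: "Lp_int k p t < \<infinity>" and b: "t powr (\<alpha> - 1 / p) * L powr (1 / p) \<le> C"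
    using bnd t by (auto simp: L_def)
  have L0: "L \<ge> 0" by (simp add: L_def)
  have LL: "Lp_int k p t = ennreal L" using fin by (simp add: L_def ennreal_enn2real_if)
  have t0: "t > 0" using t by simp
  have "L powr (1/p) = t powr (1/p - \<alpha>) * (t powr (\<alpha> - 1 / p) * L powr (1 / p))"
    using t0 by (simp add: powr_add[symmetric])
  also have "\<dots> \<le> t powr (1/p - \<alpha>) * C" using b by (intro mult_left_mono) auto
  finally have "L powr (1/p) \<le> C * t powr (1/p - \<alpha>)" by (simp add: mult.commute)
  then have "(L powr (1/p)) powr p \<le> (C * t powr (1/p - \<alpha>)) powr p"
    using pq by (intro powr_mono2) auto
  moreover have "(L powr (1/p)) powr p = L" using L0 pq by (simp add: powr_powr)
  ultimately show ?thesis unfolding LL by simp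
qed

lemma holder_k:
  assumes t: "t \<in> {0<..T}" and w: "w \<in> borel_measurable borel" and w0: "\<And>s. w s \<ge> 0"
    and b: "b > 0"
    and Iw: "(\<integral>\<^sup>+ s. ennreal (w s powr q * indicator {0<..<t} s) \<partial>lborel) \<le> ennreal (b powr q)"
  shows "(\<integral>\<^sup>+ s. ennreal (\<bar>k t s\<bar> * w s * indicator {0<..<t} s) \<partial>lborel) \<le> ennreal (C * t powr (1/p - \<alpha>) * b)"
proof -
  define f where "f = (\<lambda>s. \<bar>k t s\<bar> * indicator {0<..<t} s)"
  define g where "g = (\<lambda>s. w s * indicator {0<..<t} s)"
  have fm: "f \<in> borel_measurable lborel" unfolding f_def using kslice_meas by simp
  have gm: "g \<in> borel_measurable lborel" unfolding g_def using w by simp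
  have t0: "t > 0" using t by simp
  have If: "(\<integral>\<^sup>+ s. ennreal (f s powr p) \<partial>lborel) \<le> ennreal ((C * t powr (1/p - \<alpha>)) powr p)"
  proof -
    have "(\<integral>\<^sup>+ s. ennreal (f s powr p) \<partial>lborel) = Lp_int k p t"
      unfolding Lp_int_def f_def by (intro nn_integral_cong) (auto simp: indicator_def)
    then show ?thesis using Lp_bound[OF t] by simp
  qed
  have Ig: "(\<integral>\<^sup>+ s. ennreal (g s powr q) \<partial>lborel) \<le> ennreal (b powr q)"
  proof -
    have "(\<integral>\<^sup>+ s. ennreal (g s powr q) \<partial>lborel) = (\<integral>\<^sup>+ s. ennreal (w s powr q * indicator {0<..<t} s) \<partial>lborel)"
      unfolding g_def by (intro nn_integral_cong) (auto simp: indicator_def)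
    then show ?thesis using Iw by simp
  qed
  have "(\<integral>\<^sup>+ s. ennreal (f s * g s) \<partial>lborel) \<le> ennreal (C * t powr (1/p - \<alpha>) * b)"
    by (rule holder_nn[OF pq fm gm _ _ _ b If Ig]) (use w0 TC t0 in \<open>auto simp: f_def g_def\<close>)
  moreover have "(\<integral>\<^sup>+ s. ennreal (f s * g s) \<partial>lborel) = (\<integral>\<^sup>+ s. ennreal (\<bar>k t s\<bar> * w s * indicator {0<..<t} s) \<partial>lborel)"
    unfolding f_def g_def by (intro nn_integral_cong) (auto simp: indicator_def)
  ultimately show ?thesis by simp
qed

lemma bound1:
  assumes t: "t \<in> {0<..T}"
  shows "(\<integral>\<^sup>+ s. ennreal (\<bar>k t s\<bar> * indicator {0<..<t} s) \<partial>lborel) \<le> ennreal (C * T powr (1 - \<alpha>))"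
proof -
  have t0: "t > 0" using t by simp
  have "(\<integral>\<^sup>+ s. ennreal (1 powr q * indicator {0<..<t} s) \<partial>lborel) = ennreal ((t powr (1/q)) powr q)"
  proof -
    have "(\<integral>\<^sup>+ s. ennreal (1 powr q * indicator {0<..<t} s) \<partial>lborel) = (\<integral>\<^sup>+ s. indicator {0<..<t} s \<partial>lborel)"
      by (intro nn_integral_cong) (auto simp: indicator_def)
    also have "\<dots> = ennreal t" using t0 by simp
    finally show ?thesis using t0 pq by (simp add: powr_powr)
  qed
  then have "(\<integral>\<^sup>+ s. ennreal (\<bar>k t s\<bar> * 1 * indicator {0<..<t} s) \<partial>lborel) \<le> ennreal (C * t powr (1/p - \<alpha>) * t powr (1/q))"
    using t0 by (intro holder_k[OF t]) auto
  also have "C * t powr (1/p - \<alpha>) * t powr (1/q) = C * t powr (1 - \<alpha>)"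
  proof -
    have e: "1/p - \<alpha> + 1/q = 1 - \<alpha>" using pq by simp
    then show ?thesis using t0 by (simp add: mult.assoc powr_add[symmetric] e)
  qed
  also have "C * t powr (1 - \<alpha>) \<le> C * T powr (1 - \<alpha>)"
    using t0 t TC alpha by (intro mult_left_mono powr_mono2) auto
  then have "ennreal (C * t powr (1 - \<alpha>)) \<le> ennreal (C * T powr (1 - \<alpha>))"
    by (rule ennreal_leI)
  finally show ?thesis by simp
qed


lemma wq: "exp (\<sigma> * (s - t)) powr q = exp (q * \<sigma> * (s - t))"
  by (simp add: powr_def)

lemma key:
  assumes \<delta>: "\<delta> > 0"
  shows "\<exists>\<sigma>\<ge>0. \<forall>t\<in>{0<..T}. (\<integral>\<^sup>+ s. ennreal (\<bar>k t s\<bar> * exp (\<sigma> * (s - t)) * indicator {0<..<t} s) \<partial>lborel) \<le> ennreal \<delta>"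
proof -
  define \<beta> where "\<beta> = 1/p - \<alpha>"
  define \<gamma> where "\<gamma> = 1 - \<alpha>"
  have \<gamma>0: "\<gamma> > 0" using alpha by (simp add: \<gamma>_def)
  have bg: "\<beta> + 1/q = \<gamma>" using pq by (simp add: \<beta>_def \<gamma>_def)
  define \<tau> where "\<tau> = min T ((\<delta>/C) powr (1/\<gamma>))"
  have \<tau>0: "\<tau> > 0" and \<tau>T: "\<tau> \<le> T" using TC \<delta> by (auto simp: \<tau>_def)
  have C\<tau>: "C * \<tau> powr \<gamma> \<le> \<delta>"
  proof -
    have "\<tau> powr \<gamma> \<le> ((\<delta>/C) powr (1/\<gamma>)) powr \<gamma>"
      using \<tau>0 \<gamma>0 by (intro powr_mono2) (auto simp: \<tau>_def)
    also have "\<dots> = \<delta>/C" using \<gamma>0 \<delta> TC by (simp add: powr_powr)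
    finally show ?thesis using TC by (simp add: field_simps)
  qed
  define A where "A = C * (\<tau> powr \<beta> + T powr \<beta>)"
  have A0: "A > 0" using TC \<tau>0 by (simp add: A_def add_pos_pos)
  define \<tau>' where "\<tau>' = (\<delta>/A) powr q / 2"
  have \<tau>'0: "\<tau>' > 0" using \<delta> A0 by (simp add: \<tau>'_def)
  have A\<tau>': "A * (2 * \<tau>') powr (1/q) = \<delta>"
    using \<delta> A0 pq by (simp add: \<tau>'_def powr_powr)
  define \<sigma> where "\<sigma> = max 0 (ln (T/\<tau>') / (q * \<tau>'))"
  have \<sigma>0: "\<sigma> \<ge> 0" by (simp add: \<sigma>_def)
  have E: "T * exp (- (q * \<sigma> * \<tau>')) \<le> \<tau>'"
  proof -
    have "ln (T/\<tau>') \<le> q * \<sigma> * \<tau>'"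
    proof -
      have "ln (T/\<tau>') / (q * \<tau>') \<le> \<sigma>" by (simp add: \<sigma>_def)
      then show ?thesis using pq \<tau>'0 by (simp add: field_simps)
    qed
    then have "exp (- (q * \<sigma> * \<tau>')) \<le> exp (- ln (T/\<tau>'))" by simp
    also have "\<dots> = \<tau>' / T" using TC \<tau>'0 by (simp add: exp_minus ln_div exp_diff)
    finally show ?thesis using TC by (simp add: field_simps)
  qed
  show ?thesis
  proof (intro exI[of _ \<sigma>] conjI \<sigma>0 ballI)
    fix t assume t: "t \<in> {0<..T}"
    have t0: "t > 0" using t by simp
    define w where "w = (\<lambda>s. exp (\<sigma> * (s - t)))"
    have wm: "w \<in> borel_measurable borel" unfolding w_def by measurable
    have w0: "\<And>s. w s \<ge> 0" by (simp add: w_def)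
    have w1: "\<And>s. s \<le> t \<Longrightarrow> w s powr q \<le> 1"
    proof -
      fix s assume "s \<le> t"
      then have "q * \<sigma> * (s - t) \<le> 0" using pq \<sigma>0
        by (simp add: mult_nonneg_nonpos)
      then show "w s powr q \<le> 1" by (simp add: w_def wq)
    qed
    show "(\<integral>\<^sup>+ s. ennreal (\<bar>k t s\<bar> * exp (\<sigma> * (s - t)) * indicator {0<..<t} s) \<partial>lborel) \<le> ennreal \<delta>"
    proof (cases "t \<le> \<tau>")
      case True
      have "(\<integral>\<^sup>+ s. ennreal (w s powr q * indicator {0<..<t} s) \<partial>lborel) \<le> (\<integral>\<^sup>+ s. indicator {0<..<t} s \<partial>lborel)"
        using w1 by (intro nn_integral_mono) (auto simp: indicator_def)
      also have "\<dots> = ennreal ((t powr (1/q)) powr q)" using t0 pq by (simp add: powr_powr)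
      finally have "(\<integral>\<^sup>+ s. ennreal (\<bar>k t s\<bar> * w s * indicator {0<..<t} s) \<partial>lborel) \<le> ennreal (C * t powr (1/p - \<alpha>) * t powr (1/q))"
        using t0 by (intro holder_k[OF t wm w0]) auto
      also have "C * t powr (1/p - \<alpha>) * t powr (1/q) = C * t powr \<gamma>"
        using t0 bg by (simp add: mult.assoc powr_add[symmetric] \<beta>_def)
      also have "C * t powr \<gamma> \<le> C * \<tau> powr \<gamma>"
        using t0 True TC \<gamma>0 by (intro mult_left_mono powr_mono2) auto
      then have "ennreal (C * t powr \<gamma>) \<le> ennreal \<delta>" using C\<tau> by (intro ennreal_leI) simp
      finally show ?thesis by (simp add: w_def)
    next
      case False
      have pw: "ennreal (w s powr q * indicator {0<..<t} s) \<le> indicator {t-\<tau>'..t} s + ennreal (exp (- (q * \<sigma> * \<tau>'))) * indicator {0<..<t} s" for s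
      proof (cases "s \<in> {0<..<t}")
        case True
        show ?thesis
        proof (cases "s \<ge> t - \<tau>'")
          case True
          have "ennreal (w s powr q) \<le> 1" using w1[of s] \<open>s \<in> {0<..<t}\<close> by (simp add: ennreal_le_1)
          also have "(1::ennreal) \<le> 1 + ennreal (exp (- (q * \<sigma> * \<tau>')))" by simp
          finally show ?thesis using \<open>s \<in> {0<..<t}\<close> True by (auto simp: indicator_def)
        next
          case False
          then have "q * \<sigma> * (s - t) \<le> - (q * \<sigma> * \<tau>')"
          proof -
            have "s - t \<le> - \<tau>'" using False by simp
            then have "(q * \<sigma>) * (s - t) \<le> (q * \<sigma>) * (- \<tau>')" using pq \<sigma>0
              by (intro mult_left_mono) auto
            then show ?thesis by simp
          qed
          then have "w s powr q \<le> exp (- (q * \<sigma> * \<tau>'))" by (simp add: w_def wq)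
          then show ?thesis using \<open>s \<in> {0<..<t}\<close> False by (auto simp: indicator_def)
        qed
      qed (auto simp: indicator_def)
      have "(\<integral>\<^sup>+ s. ennreal (w s powr q * indicator {0<..<t} s) \<partial>lborel) \<le> (\<integral>\<^sup>+ s. indicator {t-\<tau>'..t} s + ennreal (exp (- (q * \<sigma> * \<tau>'))) * indicator {0<..<t} s \<partial>lborel)"
        using pw by (intro nn_integral_mono) auto
      also have "\<dots> = ennreal \<tau>' + ennreal (exp (- (q * \<sigma> * \<tau>'))) * ennreal t"
        using t0 \<tau>'0 by (simp add: nn_integral_add nn_integral_cmult)
      also have "\<dots> = ennreal (\<tau>' + exp (- (q * \<sigma> * \<tau>')) * t)"
        using t0 \<tau>'0 by (simp add: ennreal_mult ennreal_plus)
      also have "\<dots> \<le> ennreal ((( 2 * \<tau>') powr (1/q)) powr q)"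
      proof (intro ennreal_leI)
        have "exp (- (q * \<sigma> * \<tau>')) * t \<le> exp (- (q * \<sigma> * \<tau>')) * T"
          using t by (intro mult_left_mono) auto
        then show "\<tau>' + exp (- (q * \<sigma> * \<tau>')) * t \<le> ((2 * \<tau>') powr (1/q)) powr q"
        proof -
          have "((2 * \<tau>') powr (1/q)) powr q = 2 * \<tau>'" using \<tau>'0 pq by (simp add: powr_powr)
          moreover have "exp (- (q * \<sigma> * \<tau>')) * T = T * exp (- (q * \<sigma> * \<tau>'))" by simp
          ultimately show ?thesis using E \<open>exp (- (q * \<sigma> * \<tau>')) * t \<le> exp (- (q * \<sigma> * \<tau>')) * T\<close> by linarith
        qed
      qed
      finally have "(\<integral>\<^sup>+ s. ennreal (\<bar>k t s\<bar> * w s * indicator {0<..<t} s) \<partial>lborel) \<le> ennreal (C * t powr (1/p - \<alpha>) * (2 * \<tau>') powr (1/q))"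
        using \<tau>'0 by (intro holder_k[OF t wm w0]) auto
      also have "C * t powr (1/p - \<alpha>) * (2 * \<tau>') powr (1/q) \<le> A * (2 * \<tau>') powr (1/q)"
      proof (intro mult_right_mono)
        have "t powr \<beta> \<le> \<tau> powr \<beta> + T powr \<beta>"
        proof (cases "\<beta> \<ge> 0")
          case True
          then have "t powr \<beta> \<le> T powr \<beta>" using t0 t by (intro powr_mono2) auto
          then show ?thesis by (smt (verit) powr_ge_zero)
        next
          case False
          then have "t powr \<beta> \<le> \<tau> powr \<beta>" using \<tau>0 \<open>\<not> t \<le> \<tau>\<close> by (intro powr_mono2') auto
          then show ?thesis by (smt (verit) powr_ge_zero)
        qed
        then show "C * t powr (1/p - \<alpha>) \<le> A" using TC by (simp add: A_def \<beta>_def)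
      qed auto
      then have "ennreal (C * t powr (1/p - \<alpha>) * (2 * \<tau>') powr (1/q)) \<le> ennreal \<delta>"
        using A\<tau>' by (intro ennreal_leI) simp
      finally show ?thesis by (simp add: w_def)
    qed
  qed
qed


lemma integ_meas:
  assumes F: "F \<in> borel_measurable borel"
  shows "(\<lambda>s. indicator {0<..<t} s *\<^sub>R (complex_of_real (k t s) * F s)) \<in> borel_measurable lborel"
proof -
  have "(\<lambda>s. complex_of_real (k t s * indicator {0<..<t} s) * F s) \<in> borel_measurable borel"
    using kslice_meas'[of t] F by measurable
  moreover have "(\<lambda>s. complex_of_real (k t s * indicator {0<..<t} s) * F s) = (\<lambda>s. indicator {0<..<t} s *\<^sub>R (complex_of_real (k t s) * F s))"
    by (auto simp: fun_eq_iff indicator_def)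
  ultimately show ?thesis by simp
qed

lemma norm_ind: "ennreal (norm (indicator {0<..<t} s *\<^sub>R (complex_of_real (k t s) * F s))) = ennreal (\<bar>k t s\<bar> * norm (F s) * indicator {0<..<t} s)"
  by (auto simp: indicator_def norm_mult)

lemma integ:
  assumes t: "t \<in> {0<..T}" and F: "F \<in> borel_measurable borel"
    and M: "\<And>s. s \<in> {0<..<t} \<Longrightarrow> norm (F s) \<le> M"
  shows "set_integrable lborel {0<..<t} (\<lambda>s. complex_of_real (k t s) * F s)"
  unfolding set_integrable_def
proof (rule integrableI_bounded[OF integ_meas[OF F]])
  define M' where "M' = max M 0"
  have "(\<integral>\<^sup>+ s. ennreal (norm (indicator {0<..<t} s *\<^sub>R (complex_of_real (k t s) * F s))) \<partial>lborel)
      \<le> (\<integral>\<^sup>+ s. ennreal M' * ennreal (\<bar>k t s\<bar> * indicator {0<..<t} s) \<partial>lborel)"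
  proof (intro nn_integral_mono)
    fix s
    have "\<bar>k t s\<bar> * norm (F s) * indicator {0<..<t} s \<le> M' * (\<bar>k t s\<bar> * indicator {0<..<t} s)"
      using M[of s] by (auto simp: indicator_def M'_def mult.commute intro!: mult_right_mono)
    then show "ennreal (norm (indicator {0<..<t} s *\<^sub>R (complex_of_real (k t s) * F s))) \<le> ennreal M' * ennreal (\<bar>k t s\<bar> * indicator {0<..<t} s)"
      unfolding norm_ind by (simp add: M'_def flip: ennreal_mult)
  qed
  also have "\<dots> = ennreal M' * (\<integral>\<^sup>+ s. ennreal (\<bar>k t s\<bar> * indicator {0<..<t} s) \<partial>lborel)"
    using kslice_meas[of t] by (simp add: nn_integral_cmult)
  also have "\<dots> \<le> ennreal M' * ennreal (C * T powr (1 - \<alpha>))"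
    using bound1[OF t] by (intro mult_left_mono) auto
  also have "\<dots> < \<infinity>" by (simp add: ennreal_mult_less_top)
  finally show "(\<integral>\<^sup>+ s. ennreal (norm (indicator {0<..<t} s *\<^sub>R (complex_of_real (k t s) * F s))) \<partial>lborel) < \<infinity>" .
qed

lemma normb:
  assumes F: "F \<in> borel_measurable borel"
  shows "ennreal (norm (LINT s:{0<..<t}|lborel. complex_of_real (k t s) * F s))
     \<le> (\<integral>\<^sup>+ s. ennreal (\<bar>k t s\<bar> * norm (F s) * indicator {0<..<t} s) \<partial>lborel)"
proof (cases "set_integrable lborel {0<..<t} (\<lambda>s. complex_of_real (k t s) * F s)")
  case True
  then show ?thesis unfolding set_lebesgue_integral_def set_integrable_def
    by (subst norm_ind[symmetric]) (rule integral_norm_bound_ennreal)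
next
  case False
  then show ?thesis unfolding set_lebesgue_integral_def set_integrable_def
    by (simp add: not_integrable_integral_eq)
qed

lemma intbound:
  assumes t: "t \<in> {0<..T}" and F: "F \<in> borel_measurable borel"
    and M: "\<And>s. s \<in> {0<..<t} \<Longrightarrow> norm (F s) \<le> M" and M0: "M \<ge> 0"
  shows "norm (LINT s:{0<..<t}|lborel. complex_of_real (k t s) * F s) \<le> M * (C * T powr (1 - \<alpha>))"
proof -
  have "ennreal (norm (LINT s:{0<..<t}|lborel. complex_of_real (k t s) * F s))
     \<le> (\<integral>\<^sup>+ s. ennreal (\<bar>k t s\<bar> * norm (F s) * indicator {0<..<t} s) \<partial>lborel)" by (rule normb[OF F])
  also have "\<dots> \<le> (\<integral>\<^sup>+ s. ennreal M * ennreal (\<bar>k t s\<bar> * indicator {0<..<t} s) \<partial>lborel)"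
  proof (intro nn_integral_mono)
    fix s
    have "\<bar>k t s\<bar> * norm (F s) * indicator {0<..<t} s \<le> M * (\<bar>k t s\<bar> * indicator {0<..<t} s)"
      using M[of s] by (auto simp: indicator_def mult.commute intro!: mult_right_mono)
    then show "ennreal (\<bar>k t s\<bar> * norm (F s) * indicator {0<..<t} s) \<le> ennreal M * ennreal (\<bar>k t s\<bar> * indicator {0<..<t} s)"
      using M0 by (simp flip: ennreal_mult)
  qed
  also have "\<dots> = ennreal M * (\<integral>\<^sup>+ s. ennreal (\<bar>k t s\<bar> * indicator {0<..<t} s) \<partial>lborel)"
    using kslice_meas[of t] by (simp add: nn_integral_cmult)
  also have "\<dots> \<le> ennreal M * ennreal (C * T powr (1 - \<alpha>))"
    using bound1[OF t] by (intro mult_left_mono) auto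
  also have "\<dots> = ennreal (M * (C * T powr (1 - \<alpha>)))" using M0 TC by (simp add: ennreal_mult)
  finally show ?thesis using M0 TC by (subst (asm) ennreal_le_iff) auto
qed


lemma R_Bb:
  assumes g: "g \<in> Bb T"
  shows "R_op k lam T g \<in> Bb T"
proof -
  have gm: "g \<in> borel_measurable borel" by (rule Bb_borel[OF g])
  obtain M where M: "\<And>x. x \<in> g ` {0..T} \<Longrightarrow> norm x \<le> M"
    using g by (auto simp: Bb_def bounded_iff)
  have M0: "M \<ge> 0" using M[of "g 0"] TC by (force intro: order_trans[OF norm_ge_zero])
  define G where "G = (\<lambda>t. LINT s:{0<..<t}|lborel. complex_of_real (k t s) * g s)"
  have Gm[measurable]: "G \<in> borel_measurable borel" unfolding G_def by (rule G_meas[OF meas gm])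
  have eq: "R_op k lam T g = (\<lambda>t. if t = 0 then 1 else if t \<in> {0<..T} then 1 - lam * G t else 0)"
    by (simp add: fun_eq_iff R_op_def G_def)
  have "R_op k lam T g \<in> borel_measurable borel" unfolding eq by measurable
  then have m: "R_op k lam T g \<in> borel_measurable (restrict_space borel {0..T})"
    by (rule measurable_restrict_space1)
  have b: "norm (R_op k lam T g t) \<le> 1 + norm lam * (M * (C * T powr (1 - \<alpha>)))" if t: "t \<in> {0..T}" for t
  proof (cases "t = 0")
    case True
    then show ?thesis using M0 TC by (simp add: R_op_def)
  next
    case False
    then have t': "t \<in> {0<..T}" using t by auto
    have "norm (G t) \<le> M * (C * T powr (1 - \<alpha>))"
      unfolding G_def using t' by (intro intbound[OF t' gm _ M0] M) auto
    then have "norm (lam * G t) \<le> norm lam * (M * (C * T powr (1 - \<alpha>)))"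
      by (simp add: norm_mult mult_left_mono)
    then have "norm (1 - lam * G t) \<le> 1 + norm lam * (M * (C * T powr (1 - \<alpha>)))"
      using norm_triangle_ineq4[of 1 "lam * G t"] by simp
    then show ?thesis using False t' by (simp add: R_op_def G_def)
  qed
  have "bounded (R_op k lam T g ` {0..T})"
    unfolding bounded_iff using b by blast
  moreover have "\<forall>t. t \<notin> {0..T} \<longrightarrow> R_op k lam T g t = 0"
    using TC by (auto simp: R_op_def)
  ultimately show ?thesis using m by (simp add: Bb_def)
qed

lemma Rn_Bb: "g \<in> Bb T \<Longrightarrow> (R_op k lam T ^^ n) g \<in> Bb T"
  by (induction n) (auto intro: R_Bb)


lemma Bb_bound: assumes "g \<in> Bb T" obtains M where "M \<ge> 0" "\<And>s. norm (g s) \<le> M"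
proof -
  obtain M where M: "\<And>x. x \<in> g ` {0..T} \<Longrightarrow> norm x \<le> M"
    using assms by (auto simp: Bb_def bounded_iff)
  have M0: "M \<ge> 0" using M[of "g 0"] TC by (force intro: order_trans[OF norm_ge_zero])
  have "norm (g s) \<le> M" for s
    using M[of "g s"] M0 assms by (cases "s \<in> {0..T}") (auto simp: Bb_def)
  then show ?thesis using M0 that by blast
qed

lemma supnorm_ge:
  assumes g: "g \<in> Bb T" and h: "h \<in> Bb T" and t: "t \<in> {0..T}"
  shows "norm (g t - h t) \<le> supnorm T (g - h)"
proof -
  obtain M1 where "\<And>s. norm (g s) \<le> M1" using Bb_bound[OF g] by blast
  moreover obtain M2 where "\<And>s. norm (h s) \<le> M2" using Bb_bound[OF h] by blast
  ultimately have "\<And>s. norm ((g - h) s) \<le> M1 + M2"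
    by (smt (verit, best) minus_apply norm_triangle_ineq4)
  then have "bdd_above ((\<lambda>s. norm ((g - h) s)) ` {0..T})" by (intro bdd_aboveI2) simp
  then show ?thesis unfolding supnorm_def using t by (subst minus_apply[symmetric]) (rule cSUP_upper)
qed

lemma supnorm_le:
  assumes "\<And>t. t \<in> {0..T} \<Longrightarrow> norm (f t) \<le> B"
  shows "supnorm T f \<le> B"
  unfolding supnorm_def using TC assms by (intro cSUP_least) auto

lemma contr_step:
  assumes \<sigma>0: "\<sigma> \<ge> 0" and \<delta>0: "\<delta> \<ge> 0"
    and K: "\<forall>t\<in>{0<..T}. (\<integral>\<^sup>+ s. ennreal (\<bar>k t s\<bar> * exp (\<sigma> * (s - t)) * indicator {0<..<t} s) \<partial>lborel) \<le> ennreal \<delta>"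
    and lam: "norm lam * \<delta> \<le> 1/2"
    and G: "G \<in> Bb T" and H: "H \<in> Bb T" and X0: "X \<ge> 0"
    and GH: "\<And>s. s \<in> {0..T} \<Longrightarrow> norm (G s - H s) \<le> X * exp (\<sigma> * s)"
    and t: "t \<in> {0..T}"
  shows "norm (R_op k lam T G t - R_op k lam T H t) \<le> X / 2 * exp (\<sigma> * t)"
proof (cases "t = 0")
  case True
  then show ?thesis using X0 by (simp add: R_op_def)
next
  case False
  then have t': "t \<in> {0<..T}" using t by auto
  have Gm: "G \<in> borel_measurable borel" by (rule Bb_borel[OF G])
  have Hm: "H \<in> borel_measurable borel" by (rule Bb_borel[OF H])
  obtain M1 where M1: "\<And>s. norm (G s) \<le> M1" using Bb_bound[OF G] by blast
  obtain M2 where M2: "\<And>s. norm (H s) \<le> M2" using Bb_bound[OF H] by blast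
  have iG: "set_integrable lborel {0<..<t} (\<lambda>s. complex_of_real (k t s) * G s)"
    by (rule integ[OF t' Gm M1])
  have iH: "set_integrable lborel {0<..<t} (\<lambda>s. complex_of_real (k t s) * H s)"
    by (rule integ[OF t' Hm M2])
  define F where "F = (\<lambda>s. G s - H s)"
  have Fm: "F \<in> borel_measurable borel" unfolding F_def using Gm Hm by measurable
  have "(LINT s:{0<..<t}|lborel. complex_of_real (k t s) * G s) - (LINT s:{0<..<t}|lborel. complex_of_real (k t s) * H s)
      = (LINT s:{0<..<t}|lborel. complex_of_real (k t s) * G s - complex_of_real (k t s) * H s)"
    using set_integral_diff(2)[OF iG iH] by simp
  also have "\<dots> = (LINT s:{0<..<t}|lborel. complex_of_real (k t s) * F s)"
    by (simp add: F_def right_diff_distrib)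
  finally have diff: "R_op k lam T G t - R_op k lam T H t = - lam * (LINT s:{0<..<t}|lborel. complex_of_real (k t s) * F s)"
    using t' False by (simp add: R_op_def algebra_simps)
  define Y where "Y = X * exp (\<sigma> * t)"
  have Y0: "Y \<ge> 0" using X0 by (simp add: Y_def)
  have "ennreal (norm (LINT s:{0<..<t}|lborel. complex_of_real (k t s) * F s))
      \<le> (\<integral>\<^sup>+ s. ennreal (\<bar>k t s\<bar> * norm (F s) * indicator {0<..<t} s) \<partial>lborel)" by (rule normb[OF Fm])
  also have "\<dots> \<le> (\<integral>\<^sup>+ s. ennreal Y * ennreal (\<bar>k t s\<bar> * exp (\<sigma> * (s - t)) * indicator {0<..<t} s) \<partial>lborel)"
  proof (intro nn_integral_mono)
    fix s
    show "ennreal (\<bar>k t s\<bar> * norm (F s) * indicator {0<..<t} s) \<le> ennreal Y * ennreal (\<bar>k t s\<bar> * exp (\<sigma> * (s - t)) * indicator {0<..<t} s)"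
    proof (cases "s \<in> {0<..<t}")
      case True
      then have "norm (F s) \<le> X * exp (\<sigma> * s)" using GH[of s] t' by (auto simp: F_def)
      also have "X * exp (\<sigma> * s) = Y * exp (\<sigma> * (s - t))"
        by (simp add: Y_def right_diff_distrib exp_diff)
      finally have "\<bar>k t s\<bar> * norm (F s) \<le> \<bar>k t s\<bar> * (Y * exp (\<sigma> * (s - t)))"
        by (intro mult_left_mono) auto
      then have "\<bar>k t s\<bar> * norm (F s) * indicator {0<..<t} s \<le> Y * (\<bar>k t s\<bar> * exp (\<sigma> * (s - t)) * indicator {0<..<t} s)"
        using True by (simp add: algebra_simps)
      then show ?thesis using Y0 by (simp flip: ennreal_mult)
    qed auto
  qed
  also have "\<dots> = ennreal Y * (\<integral>\<^sup>+ s. ennreal (\<bar>k t s\<bar> * exp (\<sigma> * (s - t)) * indicator {0<..<t} s) \<partial>lborel)"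
  proof (intro nn_integral_cmult)
    have km: "(\<lambda>s. \<bar>k t s\<bar> * indicator {0<..<t} s * exp (\<sigma> * (s - t))) \<in> borel_measurable borel"
      using kslice_meas[of t] by measurable
    have eq: "(\<lambda>s. \<bar>k t s\<bar> * indicator {0<..<t} s * exp (\<sigma> * (s - t))) = (\<lambda>s. \<bar>k t s\<bar> * exp (\<sigma> * (s - t)) * indicator {0<..<t} s)"
      by (auto simp: fun_eq_iff)
    show "(\<lambda>s. ennreal (\<bar>k t s\<bar> * exp (\<sigma> * (s - t)) * indicator {0<..<t} s)) \<in> borel_measurable lborel"
      using km unfolding eq by simp
  qed
  also have "\<dots> \<le> ennreal Y * ennreal \<delta>"
    using K t' by (intro mult_left_mono) auto
  also have "\<dots> = ennreal (Y * \<delta>)" using Y0 \<delta>0 by (simp add: ennreal_mult)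
  finally have nb: "norm (LINT s:{0<..<t}|lborel. complex_of_real (k t s) * F s) \<le> Y * \<delta>"
    using Y0 \<delta>0 by (subst (asm) ennreal_le_iff) auto
  have "norm (R_op k lam T G t - R_op k lam T H t) = norm lam * norm (LINT s:{0<..<t}|lborel. complex_of_real (k t s) * F s)"
    unfolding diff by (simp add: norm_mult)
  also have "\<dots> \<le> norm lam * (Y * \<delta>)" using nb by (intro mult_left_mono) auto
  also have "\<dots> = Y * (norm lam * \<delta>)" by simp
  also have "\<dots> \<le> Y * (1/2)" using lam Y0 by (intro mult_left_mono) auto
  finally show ?thesis by (simp add: Y_def)
qed


lemma contr_iter:
  assumes \<sigma>0: "\<sigma> \<ge> 0" and \<delta>0: "\<delta> \<ge> 0"
    and K: "\<forall>t\<in>{0<..T}. (\<integral>\<^sup>+ s. ennreal (\<bar>k t s\<bar> * exp (\<sigma> * (s - t)) * indicator {0<..<t} s) \<partial>lborel) \<le> ennreal \<delta>"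
    and lam: "norm lam * \<delta> \<le> 1/2"
    and g: "g \<in> Bb T" and h: "h \<in> Bb T"
  shows "\<forall>t\<in>{0..T}. norm ((R_op k lam T ^^ n) g t - (R_op k lam T ^^ n) h t) \<le> supnorm T (g - h) * (1/2)^n * exp (\<sigma> * t)"
proof (induction n)
  have D0: "supnorm T (g - h) \<ge> 0"
    using supnorm_ge[OF g h, of 0] TC by (force intro: order_trans[OF norm_ge_zero])
  case 0
  show ?case
  proof
    fix t assume t: "t \<in> {0..T}"
    have "norm (g t - h t) \<le> supnorm T (g - h)" by (rule supnorm_ge[OF g h t])
    also have "\<dots> \<le> supnorm T (g - h) * exp (\<sigma> * t)"
    proof -
      have "1 \<le> exp (\<sigma> * t)" using \<sigma>0 t by simp
      then show ?thesis using D0 by (metis mult.right_neutral mult_left_mono)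
    qed
    finally show "norm ((R_op k lam T ^^ 0) g t - (R_op k lam T ^^ 0) h t) \<le> supnorm T (g - h) * (1/2)^0 * exp (\<sigma> * t)"
      by simp
  qed
next
  have D0: "supnorm T (g - h) \<ge> 0"
    using supnorm_ge[OF g h, of 0] TC by (force intro: order_trans[OF norm_ge_zero])
  case (Suc n)
  show ?case
  proof
    fix t assume t: "t \<in> {0..T}"
    have "norm (R_op k lam T ((R_op k lam T ^^ n) g) t - R_op k lam T ((R_op k lam T ^^ n) h) t)
       \<le> supnorm T (g - h) * (1/2)^n / 2 * exp (\<sigma> * t)"
      by (rule contr_step[OF \<sigma>0 \<delta>0 K lam Rn_Bb[OF g] Rn_Bb[OF h] _ _ t]) (use D0 in simp, use Suc.IH in blast)
    then show "norm ((R_op k lam T ^^ Suc n) g t - (R_op k lam T ^^ Suc n) h t) \<le> supnorm T (g - h) * (1/2)^Suc n * exp (\<sigma> * t)"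
      by simp
  qed
qed

lemma contraction:
  "\<exists>n::nat. \<exists>q::real. q < 1 \<and>
    (\<forall>g\<in>Bb T. \<forall>h\<in>Bb T. supnorm T ((R_op k lam T ^^ n) g - (R_op k lam T ^^ n) h) \<le> q * supnorm T (g - h))"
proof -
  define \<delta> where "\<delta> = 1 / (2 * (norm lam + 1))"
  have l1: "norm lam + 1 > 0" by (smt (verit) norm_ge_zero)
  have \<delta>0: "\<delta> > 0" using l1 by (simp add: \<delta>_def)
  have lam: "norm lam * \<delta> \<le> 1/2"
    using l1 by (simp add: \<delta>_def field_simps)
  obtain \<sigma> where \<sigma>0: "\<sigma> \<ge> 0" and K: "\<forall>t\<in>{0<..T}. (\<integral>\<^sup>+ s. ennreal (\<bar>k t s\<bar> * exp (\<sigma> * (s - t)) * indicator {0<..<t} s) \<partial>lborel) \<le> ennreal \<delta>"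
    using key[OF \<delta>0] by blast
  obtain n where n: "(1/2::real)^n < 1 / (2 * exp (\<sigma> * T))"
    using real_arch_pow_inv[of "1 / (2 * exp (\<sigma> * T))" "1/2"] by auto
  have nE: "(1/2::real)^n * exp (\<sigma> * T) \<le> 1/2"
    using n by (simp add: field_simps)
  show ?thesis
  proof (intro exI[of _ n] exI[of _ "1/2"] conjI ballI)
    fix g h assume g: "g \<in> Bb T" and h: "h \<in> Bb T"
    have D0: "supnorm T (g - h) \<ge> 0"
      using supnorm_ge[OF g h, of 0] TC by (force intro: order_trans[OF norm_ge_zero])
    note it = contr_iter[OF \<sigma>0 less_imp_le[OF \<delta>0] K lam g h, of n]
    show "supnorm T ((R_op k lam T ^^ n) g - (R_op k lam T ^^ n) h) \<le> 1/2 * supnorm T (g - h)"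
    proof (rule supnorm_le)
      fix t assume t: "t \<in> {0..T}"
      have "norm (((R_op k lam T ^^ n) g - (R_op k lam T ^^ n) h) t) \<le> supnorm T (g - h) * (1/2)^n * exp (\<sigma> * t)"
        using it t by simp
      also have "\<dots> \<le> supnorm T (g - h) * ((1/2)^n * exp (\<sigma> * T))"
        using D0 \<sigma>0 t by (simp add: mult.assoc mult_left_mono)
      also have "\<dots> \<le> supnorm T (g - h) * (1/2)"
        using D0 nE by (intro mult_left_mono) auto
      finally show "norm (((R_op k lam T ^^ n) g - (R_op k lam T ^^ n) h) t) \<le> 1/2 * supnorm T (g - h)"
        by simp
    qed
  qed (simp)
qed

end

theorem lemma3p1:
  fixes k :: "real \<Rightarrow> real \<Rightarrow> real" and \<alpha> \<epsilon> :: real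
  assumes meas: "(\<lambda>(t, s). k t s) \<in> borel_measurable (restrict_space borel ({0<..} \<times> {0<..}))"
    and alpha: "0 \<le> \<alpha>" "\<alpha> < 1"
    and eps: "\<epsilon> > 0"
    and KT: "\<And>T. T > 0 \<Longrightarrow> \<exists>C. \<forall>t\<in>{0<..T}.
               Lp_int k (1 + \<epsilon>) t < \<infinity> \<and>
               t powr (\<alpha> - 1 / (1 + \<epsilon>)) * enn2real (Lp_int k (1 + \<epsilon>) t) powr (1 / (1 + \<epsilon>)) \<le> C"
  shows "\<forall>(lam::complex) (T::real). T > 0 \<longrightarrow>
           (\<forall>g\<in>Bb T. R_op k lam T g \<in> Bb T) \<and>
           (\<exists>n::nat. \<exists>q::real. q < 1 \<and>
              (\<forall>g\<in>Bb T. \<forall>h\<in>Bb T.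
                 supnorm T ((R_op k lam T ^^ n) g - (R_op k lam T ^^ n) h) \<le> q * supnorm T (g - h)))"
proof (intro allI impI)
  fix lam :: complex and T :: real
  assume T: "T > 0"
  obtain C where C: "\<forall>t\<in>{0<..T}. Lp_int k (1 + \<epsilon>) t < \<infinity> \<and>
               t powr (\<alpha> - 1 / (1 + \<epsilon>)) * enn2real (Lp_int k (1 + \<epsilon>) t) powr (1 / (1 + \<epsilon>)) \<le> C"
    using KT[OF T] by blast
  interpret kctx k \<alpha> "1 + \<epsilon>" "(1 + \<epsilon>) / \<epsilon>" "max C 1" T
  proof
    show "1 < 1 + \<epsilon>" using eps by simp
    show "1 < (1 + \<epsilon>) / \<epsilon>" using eps by (simp add: field_simps)
    show "1 / (1 + \<epsilon>) + 1 / ((1 + \<epsilon>) / \<epsilon>) = 1" using eps by (simp add: field_simps)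
    show "\<forall>t\<in>{0<..T}. Lp_int k (1 + \<epsilon>) t < \<infinity> \<and>
               t powr (\<alpha> - 1 / (1 + \<epsilon>)) * enn2real (Lp_int k (1 + \<epsilon>) t) powr (1 / (1 + \<epsilon>)) \<le> max C 1"
      using C by force
  qed (use meas alpha T in auto)
  show "(\<forall>g\<in>Bb T. R_op k lam T g \<in> Bb T) \<and>
           (\<exists>n::nat. \<exists>q::real. q < 1 \<and>
              (\<forall>g\<in>Bb T. \<forall>h\<in>Bb T.
                 supnorm T ((R_op k lam T ^^ n) g - (R_op k lam T ^^ n) h) \<le> q * supnorm T (g - h)))"
    using R_Bb contraction by blast
qed

end
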